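(* Let $A:[0,T]\to\mathbb{C}^{m\times m}$ be continuous. (i) If $\big[A(t),\int_0^tA(s)ds\big]=0$ for all $t\in[0,T]$, then $\Omega_k\equiv0$ on $[0,T]$ for all $k>1$, so $\Omega(t)=\int_0^tA(s)ds$. (ii) More generally, if for some $n\ge1$, $[A(s_1),[A(s_2),[\cdots,[A(s_n),A(s_{n+1})]\cdots]]]=0$ for all $s_1,\dots,s_{n+1}\in[0,T]$, then $\Omega_k\equiv0$ on $[0,T]$ for all $k>n$.
   Context: Magnus terms: $\Omega_1(t)=\int_0^tA(s)ds$ and for $n\ge2$, $\Omega_n(t)=\sum_{j=1}^{n-1}\frac{B_j}{j!}\sum_{k_1+\cdots+k_j=n-1,\ k_i\ge1}\int_0^t\mathrm{ad}_{\Omega_{k_1}(s)}\cdots\mathrm{ad}_{\Omega_{k_j}(s)}A(s)\,ds$, where $\mathrm{ad}_XY=[X,Y]=XY-YX$ and $\frac{x}{e^x-1}=\sum_j\frac{B_j}{j!}x^j$. $\Omega=\sum_k\Omega_k$. *)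

theory Defs
  imports "HOL-Analysis.Analysis" "HOL-Computational_Algebra.Formal_Power_Series"
begin

definition ad :: "complex^'m^'m \<Rightarrow> complex^'m^'m \<Rightarrow> complex^'m^'m" where
  "ad X Y = X ** Y - Y ** X"

text \<open>The coefficient \<open>B_j / j!\<close> of \<open>x/(e^x - 1)\<close>.\<close>
definition bern_coeff :: "nat \<Rightarrow> real" where
  "bern_coeff j = fps_nth (fps_X / (fps_exp 1 - 1)) j"

definition compositions :: "nat \<Rightarrow> nat \<Rightarrow> nat list set" where
  "compositions j N = {ks. length ks = j \<and> (\<forall>k\<in>set ks. 1 \<le> k) \<and> sum_list ks = N}"

text \<open>One step of the Magnus recursion: given (a table W containing) Omega_1..Omega_(n-1),
  compute Omega_n.\<close>
definition magnus_step ::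
  "(real \<Rightarrow> complex^'m^'m) \<Rightarrow> (nat \<Rightarrow> real \<Rightarrow> complex^'m^'m) \<Rightarrow> nat \<Rightarrow> real \<Rightarrow> complex^'m^'m" where
  "magnus_step A W n t =
     (if n = 1 then integral {0..t} A
      else (\<Sum>j=1..n-1. bern_coeff j *\<^sub>R
              (\<Sum>ks\<in>compositions j (n-1).
                 integral {0..t} (\<lambda>s. foldr (\<lambda>k Y. ad (W k s) Y) ks (A s)))))"

primrec magnus_tab ::
  "(real \<Rightarrow> complex^'m^'m) \<Rightarrow> nat \<Rightarrow> nat \<Rightarrow> real \<Rightarrow> complex^'m^'m" where
  "magnus_tab A 0 = (\<lambda>k t. 0)"
| "magnus_tab A (Suc n) = (magnus_tab A n)(Suc n := magnus_step A (magnus_tab A n) (Suc n))"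

text \<open>The Magnus term Omega_n (for n \<ge> 1; Omega_0 = 0 by convention).\<close>
definition magnus :: "(real \<Rightarrow> complex^'m^'m) \<Rightarrow> nat \<Rightarrow> real \<Rightarrow> complex^'m^'m" where
  "magnus A n = magnus_tab A n n"

end

theory Submission imports Defs begin
lemma mm_add_r: "((X::complex^'m^'m) + Y) ** Z = X ** Z + Y ** Z"
  by (simp add: matrix_matrix_mult_def vec_eq_iff sum.distrib algebra_simps)
lemma mm_diff_r: "((X::complex^'m^'m) - Y) ** Z = X ** Z - Y ** Z"
  by (simp add: matrix_matrix_mult_def vec_eq_iff sum_subtractf algebra_simps)
lemma mm_diff_l: "(Z::complex^'m^'m) ** (X - Y) = Z ** X - Z ** Y"
  by (simp add: matrix_matrix_mult_def vec_eq_iff sum_subtractf algebra_simps)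
lemma mm_scale_l: "(r *\<^sub>R (X::complex^'m^'m)) ** Z = r *\<^sub>R (X ** Z)"
  by (simp add: matrix_matrix_mult_def vec_eq_iff scaleR_sum_right)
lemma mm_scale_r: "(X::complex^'m^'m) ** (r *\<^sub>R Z) = r *\<^sub>R (X ** Z)"
  by (simp add: matrix_matrix_mult_def vec_eq_iff scaleR_sum_right)
lemma ad_add_l: "ad (X + Y) Z = ad X Z + ad Y Z"
  by (simp add: ad_def mm_add_r matrix_add_ldistrib)
lemma ad_add_r: "ad Z (X + Y) = ad Z X + ad Z Y"
  by (simp add: ad_def mm_add_r matrix_add_ldistrib)
lemma ad_scale_l: "ad (r *\<^sub>R X) Z = r *\<^sub>R ad X Z"
  by (simp add: ad_def mm_scale_l mm_scale_r algebra_simps)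
lemma ad_scale_r: "ad Z (r *\<^sub>R X) = r *\<^sub>R ad Z X"
  by (simp add: ad_def mm_scale_l mm_scale_r algebra_simps)
lemma ad_0_l[simp]: "ad 0 X = 0" by (simp add: ad_def)
lemma ad_0_r[simp]: "ad X 0 = 0" by (simp add: ad_def)
lemma ad_anti: "ad X Y = - ad Y X" by (simp add: ad_def)
lemma jacobi: "ad (ad X Y) Z = ad X (ad Y Z) - ad Y (ad X Z)"
  by (simp add: ad_def mm_diff_r mm_diff_l matrix_mul_assoc algebra_simps)
lemma lin_r: "linear (ad X)"
  by (rule linearI) (simp_all add: ad_add_r ad_scale_r)
lemma lin_l: "linear (\<lambda>X. ad X Z)"
  by (rule linearI) (simp_all add: ad_add_l ad_scale_l)

lemma integral_in_subspace:
  fixes f :: "real \<Rightarrow> 'a::euclidean_space"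
  assumes U: "subspace U" and f: "\<And>x. x \<in> S \<Longrightarrow> f x \<in> U"
  shows "integral S f \<in> U"
proof (cases "f integrable_on S")
  case False
  then show ?thesis using U by (simp add: not_integrable_integral subspace_0)
next
  case True
  have "integral S f \<in> U\<^sup>\<bottom>\<^sup>\<bottom>"
  proof (unfold orthogonal_comp_def orthogonal_def, intro CollectI ballI)
    fix y assume "y \<in> {x. \<forall>y\<in>U. y \<bullet> x = 0}"
    then have y: "\<forall>z\<in>U. y \<bullet> z = 0" by (simp add: inner_commute)
    have "y \<bullet> integral S f = integral S ((\<lambda>v. y \<bullet> v) \<circ> f)"
      by (rule integral_linear[OF True bounded_linear_inner_right, symmetric])
    also have "\<dots> = integral S (\<lambda>x. 0)"
      using y f by (intro integral_cong) auto
    finally show "y \<bullet> integral S f = 0" by simp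
  qed
  then show ?thesis using orthogonal_comp_self[OF U] by simp
qed

lemma tab_0: "magnus_tab A N 0 = (\<lambda>t. 0)"
  by (induction N) auto

lemma tab_eq: "k \<le> N \<Longrightarrow> magnus_tab A N k = magnus_tab A k k"
  by (induction N) (auto simp: le_Suc_eq)

lemma magnus_rec: "n \<ge> 1 \<Longrightarrow> magnus A n = magnus_step A (magnus_tab A (n-1)) n"
  proof (cases n) qed (auto simp: magnus_def)

lemma magnus_1: "magnus A 1 t = integral {0..t} A"
  by (simp add: magnus_rec magnus_step_def)

lemma magnus_1': "magnus A (Suc 0) t = integral {0..t} A"
  using magnus_1 by simp

lemma comp_tab:
  assumes "ks \<in> compositions j (n-1)" "k \<in> set ks"
  shows "1 \<le> k" "k < n" "magnus_tab A (n-1) k = magnus A k"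
proof -
  show "1 \<le> k" using assms by (auto simp: compositions_def)
  have "k \<le> sum_list ks" using assms(2) by (simp add: member_le_sum_list)
  then have "k \<le> n - 1" using assms by (auto simp: compositions_def)
  then show "k < n" using \<open>1 \<le> k\<close> by linarith
  show "magnus_tab A (n-1) k = magnus A k"
    using tab_eq[OF \<open>k \<le> n - 1\<close>] by (simp add: magnus_def)
qed

definition Wsp :: "(real \<Rightarrow> complex^'m^'m) \<Rightarrow> real \<Rightarrow> nat \<Rightarrow> (complex^'m^'m) set" where
  "Wsp A T d = span {foldr (\<lambda>x Y. ad (A x) Y) ss (A s) | ss s.
       d \<le> length ss + 1 \<and> set ss \<subseteq> {0..T} \<and> s \<in> {0..T}}"

lemma Wsp_mono: "d \<le> e \<Longrightarrow> Wsp A T e \<subseteq> Wsp A T d"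
  unfolding Wsp_def by (rule span_mono) (fastforce intro: le_trans)

lemma Wsp_sub: "subspace (Wsp A T d)"
  unfolding Wsp_def by (rule subspace_span)

lemma L1:
  assumes "X \<in> Wsp A T e" "x \<in> {0..T}"
  shows "ad (A x) X \<in> Wsp A T (Suc e)"
proof -
  let ?G = "\<lambda>d. {foldr (\<lambda>x Y. ad (A x) Y) ss (A s) | ss s.
       d \<le> length ss + 1 \<and> set ss \<subseteq> {0..T} \<and> s \<in> {0..T}}"
  have "ad (A x) X \<in> ad (A x) ` span (?G e)" using assms(1) by (auto simp: Wsp_def)
  also have "\<dots> = span (ad (A x) ` ?G e)" by (rule linear_span_image[OF lin_r, symmetric])
  also have "\<dots> \<subseteq> span (?G (Suc e))"
  proof (rule span_mono, rule subsetI)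
    fix y assume "y \<in> ad (A x) ` ?G e"
    then obtain ss s where "e \<le> length ss + 1" "set ss \<subseteq> {0..T}" "s \<in> {0..T}"
      and y: "y = ad (A x) (foldr (\<lambda>x Y. ad (A x) Y) ss (A s))" by blast
    then show "y \<in> ?G (Suc e)"
      using assms(2) by (intro CollectI exI[of _ "x # ss"] exI[of _ s]) auto
  qed
  finally show ?thesis by (simp add: Wsp_def)
qed

lemma L2:
  assumes "set ss \<subseteq> {0..T}" "s \<in> {0..T}"
  shows "\<And>Z b. Z \<in> Wsp A T b \<Longrightarrow> ad (foldr (\<lambda>x Y. ad (A x) Y) ss (A s)) Z \<in> Wsp A T (length ss + 1 + b)"
  using assms(1)
proof (induction ss)
  case Nil
  then show ?case using L1[OF Nil(1) assms(2)] by simp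
next
  case (Cons x ss)
  let ?Y = "foldr (\<lambda>x Y. ad (A x) Y) ss (A s)"
  have x: "x \<in> {0..T}" and ss: "set ss \<subseteq> {0..T}" using Cons.prems by auto
  have 1: "ad (A x) (ad ?Y Z) \<in> Wsp A T (length (x#ss) + 1 + b)"
    using L1[OF Cons.IH[OF Cons.prems(1) ss] x] by simp
  have "ad (A x) Z \<in> Wsp A T (Suc b)" using L1[OF Cons.prems(1) x] .
  from Cons.IH[OF this ss]
  have 2: "ad ?Y (ad (A x) Z) \<in> Wsp A T (length (x#ss) + 1 + b)" by simp
  show ?case using subspace_diff[OF Wsp_sub 1 2] by (simp add: jacobi)
qed

lemma L3:
  assumes "X \<in> Wsp A T a" "Z \<in> Wsp A T b"
  shows "ad X Z \<in> Wsp A T (a + b)"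
proof -
  let ?G = "{foldr (\<lambda>x Y. ad (A x) Y) ss (A s) | ss s.
       a \<le> length ss + 1 \<and> set ss \<subseteq> {0..T} \<and> s \<in> {0..T}}"
  have "span ?G \<subseteq> (\<lambda>X. ad X Z) -` Wsp A T (a + b)"
  proof (rule span_minimal)
    show "subspace ((\<lambda>X. ad X Z) -` Wsp A T (a + b))"
      by (rule linear_subspace_vimage[OF lin_l Wsp_sub])
    show "?G \<subseteq> (\<lambda>X. ad X Z) -` Wsp A T (a + b)"
    proof (rule subsetI)
      fix y assume "y \<in> ?G"
      then obtain ss s where h: "a \<le> length ss + 1" "set ss \<subseteq> {0..T}" "s \<in> {0..T}"
        and y: "y = foldr (\<lambda>x Y. ad (A x) Y) ss (A s)" by blast
      have "ad (foldr (\<lambda>x Y. ad (A x) Y) ss (A s)) Z \<in> Wsp A T (length ss + 1 + b)"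
        using L2[OF h(2,3) assms(2)] .
      also have "\<dots> \<subseteq> Wsp A T (a + b)" by (rule Wsp_mono) (use h in auto)
      finally show "y \<in> (\<lambda>X. ad X Z) -` Wsp A T (a + b)" using y by simp
    qed
  qed
  then show ?thesis using assms(1) by (auto simp: Wsp_def)
qed

lemma foldr_ad_0: "foldr (\<lambda>x Y. ad (A x) Y) ys 0 = 0"
  by (induction ys) auto

lemma L4:
  assumes hyp: "\<forall>ss s. length ss = n \<and> set ss \<subseteq> {0..T} \<and> s \<in> {0..T} \<longrightarrow>
                        foldr (\<lambda>x Y. ad (A x) Y) ss (A s) = 0"
    and X: "X \<in> Wsp A T (Suc n)"
  shows "X = 0"
proof -
  let ?G = "{foldr (\<lambda>x Y. ad (A x) Y) ss (A s) | ss s.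
       Suc n \<le> length ss + 1 \<and> set ss \<subseteq> {0..T} \<and> s \<in> {0..T}}"
  have "span ?G \<subseteq> {0}"
  proof (rule span_minimal)
    show "subspace {0::complex^'m^'m}" by (simp add: subspace_0)
    show "?G \<subseteq> {0}"
    proof (rule subsetI)
      fix y assume "y \<in> ?G"
      then obtain ss s where h: "Suc n \<le> length ss + 1" "set ss \<subseteq> {0..T}" "s \<in> {0..T}"
        and y: "y = foldr (\<lambda>x Y. ad (A x) Y) ss (A s)" by blast
      let ?m = "length ss - n"
      have e: "ss = take ?m ss @ drop ?m ss" by simp
      have "foldr (\<lambda>x Y. ad (A x) Y) (drop ?m ss) (A s) = 0"
        using hyp h set_drop_subset[of ?m ss] by auto
      then have "foldr (\<lambda>x Y. ad (A x) Y) ss (A s) = 0"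
        by (subst e, simp only: foldr_append, simp add: foldr_ad_0)
      then show "y \<in> {0}" using y by simp
    qed
  qed
  then show ?thesis using X by (auto simp: Wsp_def)
qed

lemma L5:
  assumes "s \<in> {0..T}" "\<And>k. k \<in> set ks \<Longrightarrow> Wt k s \<in> Wsp A T k"
  shows "foldr (\<lambda>k Y. ad (Wt k s) Y) ks (A s) \<in> Wsp A T (sum_list ks + 1)"
  using assms(2)
proof (induction ks)
  case Nil
  have "A s \<in> Wsp A T 1" unfolding Wsp_def
    by (rule span_base) (use assms(1) in \<open>auto intro!: exI[of _ "[]"]\<close>)
  then show ?case by simp
next
  case (Cons k ks)
  from L3[OF Cons.prems[of k] Cons.IH] Cons.prems show ?case by (simp add: add.assoc)
qed

lemma part2:
  assumes hyp: "\<forall>ss s. length ss = n \<and> set ss \<subseteq> {0..T} \<and> s \<in> {0..T} \<longrightarrow>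
                        foldr (\<lambda>x Y. ad (A x) Y) ss (A s) = 0"
  shows "\<forall>k>n. \<forall>t\<in>{0..T}. magnus A k t = 0"
proof -
  have main: "\<forall>t\<in>{0..T}. magnus A k t \<in> Wsp A T k" if "k \<ge> 1" for k
    using that
  proof (induction k rule: less_induct)
    case (less k)
    show ?case
    proof
      fix t assume t: "t \<in> {0..T}"
      show "magnus A k t \<in> Wsp A T k"
      proof (cases "k = 1")
        case True
        have "integral {0..t} A \<in> Wsp A T 1"
        proof (rule integral_in_subspace[OF Wsp_sub])
          fix s assume "s \<in> {0..t}"
          then have "s \<in> {0..T}" using t by auto
          then show "A s \<in> Wsp A T 1" unfolding Wsp_def
            by (intro span_base) (auto intro!: exI[of _ "[]"])
        qed
        then show ?thesis using True by (simp add: magnus_1')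
      next
        case False
        have "magnus_step A (magnus_tab A (k-1)) k t \<in> Wsp A T k"
          unfolding magnus_step_def if_not_P[OF False]
        proof (intro subspace_sum[OF Wsp_sub] subspace_scale[OF Wsp_sub]
              integral_in_subspace[OF Wsp_sub])
          fix j ks s assume ks: "ks \<in> compositions j (k - 1)" and s: "s \<in> {0..t}"
          have sT: "s \<in> {0..T}" using s t by auto
          have "foldr (\<lambda>ka. ad (magnus_tab A (k - 1) ka s)) ks (A s) \<in> Wsp A T (sum_list ks + 1)"
          proof (rule L5[OF sT])
            fix i assume i: "i \<in> set ks"
            show "magnus_tab A (k - 1) i s \<in> Wsp A T i"
            proof -
              have "1 \<le> i" "i < k" using comp_tab[OF ks i] by auto
              then have "magnus A i s \<in> Wsp A T i" using less.IH sT by blast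
              then show ?thesis using comp_tab(3)[OF ks i, of A] by simp
            qed
          qed
          moreover have "sum_list ks + 1 = k" using ks less.prems False
            by (auto simp: compositions_def)
          ultimately show "foldr (\<lambda>ka. ad (magnus_tab A (k - 1) ka s)) ks (A s) \<in> Wsp A T k"
            by simp
        qed
        then show ?thesis using less.prems by (simp add: magnus_rec)
      qed
    qed
  qed
  show ?thesis
  proof (intro allI impI ballI)
    fix k t assume k: "k > n" and t: "t \<in> {0..T}"
    have "magnus A k t \<in> Wsp A T k" using main[of k] k t by auto
    also have "\<dots> \<subseteq> Wsp A T (Suc n)" using k by (intro Wsp_mono) auto
    finally show "magnus A k t = 0" using L4[OF hyp] by blast
  qed
qed

lemma Zlem:
  assumes "ks \<noteq> []" "\<forall>k\<in>set ks. k = 1 \<or> Wt k s = 0" "Wt 1 s = I"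
    "ad (A s) I = 0"
  shows "foldr (\<lambda>k Y. ad (Wt k s) Y) ks (A s) = 0"
  using assms(1,2)
proof (induction ks)
  case Nil then show ?case by simp
next
  case (Cons k ks)
  show ?case
  proof (cases "ks = []")
    case True
    then show ?thesis using Cons.prems assms(3,4) ad_anti[of I "A s"] by auto
  next
    case False
    then show ?thesis using Cons by simp
  qed
qed

lemma part1:
  assumes hyp: "\<forall>t\<in>{0..T}. ad (A t) (integral {0..t} A) = 0"
  shows "\<forall>k>1. \<forall>t\<in>{0..T}. magnus A k t = 0"
proof (intro allI impI)
  fix k :: nat assume "k > 1"
  then show "\<forall>t\<in>{0..T}. magnus A k t = 0"
  proof (induction k rule: less_induct)
    case (less k)
    show ?case
    proof
      fix t assume t: "t \<in> {0..T}"
      have "magnus_step A (magnus_tab A (k-1)) k t = 0"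
        unfolding magnus_step_def using less.prems
      proof (simp only: if_not_P[of "k = 1"], intro sum.neutral ballI)
       fix j assume j: "j \<in> {1..k-1}"
       have "(\<Sum>ks\<in>compositions j (k - 1). integral {0..t} (\<lambda>s. foldr (\<lambda>ka. ad (magnus_tab A (k - 1) ka s)) ks (A s))) = 0"
       proof (intro sum.neutral ballI)
        fix ks assume ks: "ks \<in> compositions j (k - 1)"
        have "integral {0..t} (\<lambda>s. foldr (\<lambda>ka. ad (magnus_tab A (k - 1) ka s)) ks (A s))
              = integral {0..t} (\<lambda>s. 0)"
        proof (rule integral_cong)
          fix s assume s: "s \<in> {0..t}"
          have sT: "s \<in> {0..T}" using s t by auto
          show "foldr (\<lambda>ka. ad (magnus_tab A (k - 1) ka s)) ks (A s) = 0"
          proof (rule Zlem[where I = "integral {0..s} A"])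
            show "ks \<noteq> []" using j ks by (auto simp: compositions_def)
            show "\<forall>i\<in>set ks. i = 1 \<or> magnus_tab A (k - 1) i s = 0"
            proof
              fix i assume i: "i \<in> set ks"
              show "i = 1 \<or> magnus_tab A (k - 1) i s = 0"
              proof (cases "i = 1")
                case False
                have "1 < i" "i < k" using comp_tab[OF ks i] False by auto
                then have "magnus A i s = 0" using less.IH sT by blast
                then show ?thesis using comp_tab(3)[OF ks i, of A] by simp
              qed simp
            qed
            have "1 \<in> {1..k-1}" using less.prems by auto
            then show "magnus_tab A (k - 1) 1 s = integral {0..s} A"
              using tab_eq[of 1 "k-1" A] less.prems by (simp add: magnus_step_def)
            show "ad (A s) (integral {0..s} A) = 0" using hyp sT by auto
          qed
        qed
        then show "integral {0..t} (\<lambda>s. foldr (\<lambda>ka. ad (magnus_tab A (k - 1) ka s)) ks (A s)) = 0"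
          by simp
       qed
       then show "bern_coeff j *\<^sub>R (\<Sum>ks\<in>compositions j (k - 1). integral {0..t} (\<lambda>s. foldr (\<lambda>ka. ad (magnus_tab A (k - 1) ka s)) ks (A s))) = 0" by simp
      qed
      then show "magnus A k t = 0" using less.prems by (simp add: magnus_rec)
    qed
  qed
qed

theorem mainTheorem10:
  fixes A :: "real \<Rightarrow> complex^'m^'m" and T :: real
  assumes cont: "continuous_on {0..T} A"
  shows "((\<forall>t\<in>{0..T}. ad (A t) (integral {0..t} A) = 0) \<longrightarrow>
            (\<forall>k>1. \<forall>t\<in>{0..T}. magnus A k t = 0) \<and>
            (\<forall>t\<in>{0..T}. (\<lambda>k. magnus A (Suc k) t) sums integral {0..t} A))
       \<and> (\<forall>n\<ge>1. (\<forall>ss s. length ss = n \<and> set ss \<subseteq> {0..T} \<and> s \<in> {0..T} \<longrightarrow>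
                        foldr (\<lambda>x Y. ad (A x) Y) ss (A s) = 0) \<longrightarrow>
            (\<forall>k>n. \<forall>t\<in>{0..T}. magnus A k t = 0))"
proof (intro conjI impI)
  assume h: "\<forall>t\<in>{0..T}. ad (A t) (integral {0..t} A) = 0"
  show p1: "\<forall>k>1. \<forall>t\<in>{0..T}. magnus A k t = 0" using part1[OF h] .
  show "\<forall>t\<in>{0..T}. (\<lambda>k. magnus A (Suc k) t) sums integral {0..t} A"
  proof
    fix t assume t: "t \<in> {0..T}"
    have "(\<lambda>k. magnus A (Suc k) t) = (\<lambda>k. if k = 0 then integral {0..t} A else 0)"
      using p1 t by (auto simp: magnus_1')
    then show "(\<lambda>k. magnus A (Suc k) t) sums integral {0..t} A"
      using sums_single[of 0 "\<lambda>_. integral {0..t} A"] by simp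
  qed
next
  show "\<forall>n\<ge>1. (\<forall>ss s. length ss = n \<and> set ss \<subseteq> {0..T} \<and> s \<in> {0..T} \<longrightarrow>
                        foldr (\<lambda>x Y. ad (A x) Y) ss (A s) = 0) \<longrightarrow>
            (\<forall>k>n. \<forall>t\<in>{0..T}. magnus A k t = 0)"
    using part2 by blast
qed

end
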